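(* Let $p$ be a prime and $\alpha\in\mathbb{Q}_p$ an algebraic number, and let $(b_n)$ be the sequence of partial quotients produced from $\alpha$ by Algorithm C (defined in the context), after eliminating all zero partial quotients. Then for every $n$ such that $v_p(b_n)<0$, $v_p(b_{n+1})=0$ and $v_p(b_{n+2})=0$, one has $v_p(b_{n+1}b_{n+2}+1)=0$.
   Context: Let $\mathcal{R}=\{-\frac{p-1}{2},\dots,0,\dots,\frac{p-1}{2}\}$ if $p$ is odd, and $\mathcal{R}=\{0,1\}$ if $p=2$. Every nonzero $\alpha\in\mathbb{Q}_p$ is written uniquely as $\alpha=\sum_{n\ge r}a_np^n$ with $r=v_p(\alpha)$, $a_n\in\mathcal{R}$, $a_r\ne0$. Put $s(\alpha)=\sum_{n=r}^{0}a_np^n$, $t(\alpha)=\sum_{n=r}^{-1}a_np^n$ (empty sums are $0$; $s(0)=t(0)=0$). For an algebraic $\alpha\in\mathbb{Q}_p$ whose minimal polynomial over $\mathbb{Q}$ has degree $d$, with trace $\operatorname{Tr}(\alpha)$, and $\operatorname{round}(x)$ the integer nearest to the real $x$, define $\bar s(\alpha)=\operatorname{round}\!\left(\frac{\operatorname{Tr}(\alpha)/d-s(\alpha)}{p}\right)p+s(\alpha)$ and $\bar t(\alpha)=\operatorname{round}\!\left(\operatorname{Tr}(\alpha)/d-t(\alpha)\right)+t(\alpha)$. Algorithm C: set $\alpha_0=\alpha$; for $n\ge0$ let $b_n=\bar s(\alpha_n)$ if $n\equiv0\pmod 3$ and $b_n=\bar t(\alpha_n)$ if $n\equiv1,2\pmod3$;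 if $\alpha_n=b_n$ stop, otherwise set $\alpha_{n+1}=\frac{1}{\alpha_n-b_n}$. Zero partial quotients may occur; they are eliminated from the sequence via $[\dots,b_{n-1},b_n,0,b_{n+1},b_{n+2},\dots]=[\dots,b_{n-1},b_n+b_{n+1},b_{n+2},\dots]$, and the resulting sequence is re-indexed consecutively. *)

theory Defs
  imports Complex_Main "HOL-Computational_Algebra.Computational_Algebra"
begin

definition qval :: "nat \<Rightarrow> rat \<Rightarrow> int" where
  "qval p q = (case quotient_of q of (a, b) \<Rightarrow>
      int (multiplicity (int p) a) - int (multiplicity (int p) b))"

text \<open>"x has valuation at least N" (x = 0 counts as valuation infinity).\<close>
definition vge :: "('k::zero \<Rightarrow> int) \<Rightarrow> 'k \<Rightarrow> int \<Rightarrow> bool" where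
  "vge v x N \<longleftrightarrow> x = 0 \<or> v x \<ge> N"

text \<open>A field of characteristic 0 with a valuation v (v 0 is irrelevant) that
  extends the p-adic valuation of Q, in which Q is dense and which is complete:
  such a field is (isomorphic to) Q_p with its p-adic valuation.\<close>
definition padic_field :: "nat \<Rightarrow> ('k::field_char_0 \<Rightarrow> int) \<Rightarrow> bool" where
  "padic_field p v \<longleftrightarrow> prime p \<and>
     (\<forall>x y. x \<noteq> 0 \<and> y \<noteq> 0 \<longrightarrow> v (x * y) = v x + v y) \<and>
     (\<forall>x y. x \<noteq> 0 \<and> y \<noteq> 0 \<and> x + y \<noteq> 0 \<longrightarrow> v (x + y) \<ge> min (v x) (v y)) \<and>
     (\<forall>q::rat. q \<noteq> 0 \<longrightarrow> v (of_rat q) = qval p q) \<and>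
     (\<forall>x. \<forall>N. \<exists>q::rat. vge v (x - of_rat q) N) \<and>
     (\<forall>X::nat \<Rightarrow> 'k. (\<forall>N. \<exists>M. \<forall>m\<ge>M. \<forall>n\<ge>M. vge v (X m - X n) N) \<longrightarrow>
        (\<exists>L. \<forall>N. \<exists>M. \<forall>n\<ge>M. vge v (X n - L) N))"

definition digitset :: "nat \<Rightarrow> int set" where
  "digitset p = (if p = 2 then {0, 1} else {- ((int p - 1) div 2) .. (int p - 1) div 2})"

definition is_padic_expansion :: "nat \<Rightarrow> ('k::field_char_0 \<Rightarrow> int) \<Rightarrow> 'k \<Rightarrow> (int \<Rightarrow> int) \<Rightarrow> bool" where
  "is_padic_expansion p v \<alpha> a \<longleftrightarrow>
     (\<forall>n. a n \<in> digitset p) \<and> (\<forall>n < v \<alpha>. a n = 0) \<and> a (v \<alpha>) \<noteq> 0 \<and>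
     (\<forall>N \<ge> v \<alpha>. vge v (\<alpha> - of_rat (\<Sum>n\<in>{v \<alpha>..N}. of_int (a n) * of_nat p powi n)) (N + 1))"

definition digits :: "nat \<Rightarrow> ('k::field_char_0 \<Rightarrow> int) \<Rightarrow> 'k \<Rightarrow> int \<Rightarrow> int" where
  "digits p v \<alpha> = (THE a. is_padic_expansion p v \<alpha> a)"

definition s_part :: "nat \<Rightarrow> ('k::field_char_0 \<Rightarrow> int) \<Rightarrow> 'k \<Rightarrow> rat" where
  "s_part p v \<alpha> = (if \<alpha> = 0 then 0 else
     (\<Sum>n\<in>{v \<alpha>..0}. of_int (digits p v \<alpha> n) * of_nat p powi n))"

definition t_part :: "nat \<Rightarrow> ('k::field_char_0 \<Rightarrow> int) \<Rightarrow> 'k \<Rightarrow> rat" where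
  "t_part p v \<alpha> = (if \<alpha> = 0 then 0 else
     (\<Sum>n\<in>{v \<alpha>..-1}. of_int (digits p v \<alpha> n) * of_nat p powi n))"

definition is_min_poly :: "rat poly \<Rightarrow> 'k::field_char_0 \<Rightarrow> bool" where
  "is_min_poly f \<alpha> \<longleftrightarrow> lead_coeff f = 1 \<and> poly (map_poly of_rat f) \<alpha> = 0 \<and>
     (\<forall>g::rat poly. g \<noteq> 0 \<and> poly (map_poly of_rat g) \<alpha> = 0 \<longrightarrow> degree f \<le> degree g)"

definition min_poly :: "'k::field_char_0 \<Rightarrow> rat poly" where
  "min_poly \<alpha> = (THE f. is_min_poly f \<alpha>)"

definition trace_rat :: "'k::field_char_0 \<Rightarrow> rat" where
  "trace_rat \<alpha> = - coeff (min_poly \<alpha>) (degree (min_poly \<alpha>) - 1)"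

definition sbar :: "nat \<Rightarrow> ('k::field_char_0 \<Rightarrow> int) \<Rightarrow> 'k \<Rightarrow> rat" where
  "sbar p v \<alpha> = of_int (round ((trace_rat \<alpha> / of_nat (degree (min_poly \<alpha>)) - s_part p v \<alpha>) / of_nat p))
                 * of_nat p + s_part p v \<alpha>"

definition tbar :: "nat \<Rightarrow> ('k::field_char_0 \<Rightarrow> int) \<Rightarrow> 'k \<Rightarrow> rat" where
  "tbar p v \<alpha> = of_int (round (trace_rat \<alpha> / of_nat (degree (min_poly \<alpha>)) - t_part p v \<alpha>))
                 + t_part p v \<alpha>"

definition algC_b :: "nat \<Rightarrow> ('k::field_char_0 \<Rightarrow> int) \<Rightarrow> nat \<Rightarrow> 'k \<Rightarrow> rat" where
  "algC_b p v n x = (if n mod 3 = 0 then sbar p v x else tbar p v x)"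

text \<open>The complete quotients; None once the algorithm has stopped.\<close>
primrec algC_alpha :: "nat \<Rightarrow> ('k::field_char_0 \<Rightarrow> int) \<Rightarrow> 'k \<Rightarrow> nat \<Rightarrow> 'k option" where
  "algC_alpha p v \<alpha> 0 = Some \<alpha>"
| "algC_alpha p v \<alpha> (Suc n) = (case algC_alpha p v \<alpha> n of None \<Rightarrow> None
     | Some x \<Rightarrow> (if x = of_rat (algC_b p v n x) then None
                  else Some (inverse (x - of_rat (algC_b p v n x)))))"

definition algC_raw :: "nat \<Rightarrow> ('k::field_char_0 \<Rightarrow> int) \<Rightarrow> 'k \<Rightarrow> nat \<Rightarrow> rat option" where
  "algC_raw p v \<alpha> n = map_option (algC_b p v n) (algC_alpha p v \<alpha> n)"

definition algC_raw_prefix :: "nat \<Rightarrow> ('k::field_char_0 \<Rightarrow> int) \<Rightarrow> 'k \<Rightarrow> nat \<Rightarrow> rat list" where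
  "algC_raw_prefix p v \<alpha> N =
     map the (takeWhile (\<lambda>x. x \<noteq> None) (map (algC_raw p v \<alpha>) [0..<N]))"

fun elim_zeros :: "rat list \<Rightarrow> rat list" where
  "elim_zeros (x # z # y # rest) =
     (if z = 0 then elim_zeros ((x + y) # rest) else x # elim_zeros (z # y # rest))"
| "elim_zeros xs = xs"

text \<open>The n-th partial quotient of the sequence after eliminating all zeros exists
  and equals c: it is the stable value of the n-th entry of the zero-eliminated
  finite prefixes.\<close>
definition algC_term :: "nat \<Rightarrow> ('k::field_char_0 \<Rightarrow> int) \<Rightarrow> 'k \<Rightarrow> nat \<Rightarrow> rat \<Rightarrow> bool" where
  "algC_term p v \<alpha> n c \<longleftrightarrow>
     (\<forall>\<^sub>F N in sequentially. n < length (elim_zeros (algC_raw_prefix p v \<alpha> N)) \<and>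
                              elim_zeros (algC_raw_prefix p v \<alpha> N) ! n = c)"

end

theory Submission
  imports Defs
begin

lemma of_rat_powi: "(of_rat (x powi n) :: 'a::field_char_0) = of_rat x powi n"
proof (cases "n \<ge> 0")
  case True then show ?thesis by (simp add: power_int_nonneg_exp of_rat_power)
next
  case False
  have "x powi n = inverse (x powi (-n))" using power_int_minus[of x "-n"] by simp
  moreover have "(of_rat x :: 'a) powi n = inverse (of_rat x powi (-n))" using power_int_minus[of "of_rat x" "-n"] by simp
  moreover have "x powi (-n) = x ^ nat (-n)" using False by (simp add: power_int_nonneg_exp)
  moreover have "(of_rat x :: 'a) powi (-n) = of_rat x ^ nat (-n)" using False by (simp add: power_int_nonneg_exp)
  ultimately show ?thesis by (simp add: of_rat_inverse of_rat_power)
qed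

lemma aux_field: "(b::'k::field_char_0) \<noteq> 0 \<Longrightarrow> a / b - a * u = a * (1 - u * b) * inverse b"
  by (simp add: field_simps)

lemma qval_int: "qval p (of_int k) = int (multiplicity (int p) k)"
  by (simp add: qval_def quotient_of_int)

lemma vge_zero[simp]: "vge v 0 N" by (simp add: vge_def)

definition pdig :: "nat \<Rightarrow> ('k::field_char_0 \<Rightarrow> int) \<Rightarrow> 'k \<Rightarrow> int" where
  "pdig p v y = (SOME d. d \<in> digitset p \<and> vge v (y - of_int d) 1)"

primrec prem :: "nat \<Rightarrow> ('k::field_char_0 \<Rightarrow> int) \<Rightarrow> 'k \<Rightarrow> nat \<Rightarrow> 'k" where
  "prem p v x 0 = x"
| "prem p v x (Suc k) = prem p v x k - of_int (pdig p v (prem p v x k / of_nat p powi (v x + int k))) * of_nat p powi (v x + int k)"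

definition pdigits :: "nat \<Rightarrow> ('k::field_char_0 \<Rightarrow> int) \<Rightarrow> 'k \<Rightarrow> int \<Rightarrow> int" where
  "pdigits p v x n = (if n < v x then 0 else pdig p v (prem p v x (nat (n - v x)) / of_nat p powi n))"

context
  fixes p :: nat and v :: "'k::field_char_0 \<Rightarrow> int"
  assumes pf: "padic_field p v"
begin

lemma pprime: "prime p" using pf by (simp add: padic_field_def)
lemma vmult: "x \<noteq> 0 \<Longrightarrow> y \<noteq> 0 \<Longrightarrow> v (x * y) = v x + v y"
  using pf by (simp add: padic_field_def)
lemma vadd: "x \<noteq> 0 \<Longrightarrow> y \<noteq> 0 \<Longrightarrow> x + y \<noteq> 0 \<Longrightarrow> v (x + y) \<ge> min (v x) (v y)"
  using pf by (simp add: padic_field_def)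
lemma vrat: "q \<noteq> 0 \<Longrightarrow> v (of_rat q) = qval p q"
  using pf by (simp add: padic_field_def)
lemma dense: "\<exists>q. vge v (x - of_rat q) N"
  using pf by (simp add: padic_field_def)

lemma v1: "v 1 = 0" using vmult[of 1 1] by simp
lemma vinv: "x \<noteq> 0 \<Longrightarrow> v (inverse x) = - v x"
  using vmult[of x "inverse x"] v1 by simp
lemma vneg1: "v (-1) = 0" using vmult[of "-1" "-1"] v1 by simp
lemma vneg: "x \<noteq> 0 \<Longrightarrow> v (- x) = v x"
  using vmult[of "-1" x] vneg1 by simp
lemma vdiv: "x \<noteq> 0 \<Longrightarrow> y \<noteq> 0 \<Longrightarrow> v (x / y) = v x - v y"
  using vmult[of x "inverse y"] vinv[of y] by (simp add: divide_inverse)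

lemma vge_add: "vge v x N \<Longrightarrow> vge v y N \<Longrightarrow> vge v (x + y) N"
  unfolding vge_def using vadd[of x y] by force
lemma vge_neg: "vge v x N \<Longrightarrow> vge v (- x) N"
  unfolding vge_def using vneg[of x] by force
lemma vge_diff: "vge v x N \<Longrightarrow> vge v y N \<Longrightarrow> vge v (x - y) N"
  using vge_add[of x N "-y"] vge_neg[of y N] by simp
lemma vge_mono: "vge v x N \<Longrightarrow> M \<le> N \<Longrightarrow> vge v x M"
  unfolding vge_def by auto
lemma vge_mult: "vge v x N \<Longrightarrow> vge v y M \<Longrightarrow> vge v (x * y) (N + M)"
proof -
  assume a: "vge v x N" "vge v y M"
  show ?thesis
  proof (cases "x = 0 \<or> y = 0")
    case True then show ?thesis by (auto simp: vge_def)
  next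
    case False
    then have "v (x * y) = v x + v y" by (simp add: vmult)
    with a False show ?thesis by (simp add: vge_def)
  qed
qed
lemma vge_sym: "vge v (x - y) N \<Longrightarrow> vge v (y - x) N"
  using vge_neg[of "x - y" N] by simp

lemma v_eq:
  assumes "vge v (x - y) N" "x \<noteq> 0" "v x < N"
  shows "y \<noteq> 0 \<and> v y = v x"
proof (cases "x - y = 0")
  case True then show ?thesis using assms by simp
next
  case False
  then have d: "v (x - y) \<ge> N" using assms(1) by (simp add: vge_def)
  have y0: "y \<noteq> 0" using d assms by auto
  have "v (x + (- (x - y))) \<ge> min (v x) (v (- (x - y)))"
    using vadd[of x "- (x - y)"] False assms(2) y0 by simp
  then have g1: "v y \<ge> v x" using vneg[OF False] d assms(3) by simp
  have "v (y + (x - y)) \<ge> min (v y) (v (x - y))"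
    using vadd[of y "x - y"] False assms(2) y0 by simp
  then have "v x \<ge> min (v y) (v (x - y))" by simp
  then have "v x \<ge> v y" using d assms(3) by linarith
  with g1 y0 show ?thesis by simp
qed

lemma v_int: "k \<noteq> 0 \<Longrightarrow> v (of_int k) = int (multiplicity (int p) k)"
  using vrat[of "of_int k"] by (simp add: qval_int)
lemma v_int_ge: "k \<noteq> 0 \<Longrightarrow> v (of_int k) \<ge> 0"
  using v_int by simp
lemma v_int_0: "\<not> int p dvd k \<Longrightarrow> v (of_int k) = 0"
proof -
  assume a: "\<not> int p dvd k"
  then have "k \<noteq> 0" by auto
  then have "v (of_int k) = int (multiplicity (int p) k)" by (rule v_int)
  also have "multiplicity (int p) k = 0" by (rule not_dvd_imp_multiplicity_0[OF a])
  finally show ?thesis by simp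
qed
lemma v_p: "v (of_nat p) = 1"
proof -
  have "prime (int p)" using pprime by simp
  have "multiplicity (int p) (int p) = 1"
  proof (rule multiplicity_self)
    show "int p \<noteq> 0" using pprime by (simp add: prime_gt_0_nat)
    show "\<not> is_unit (int p)" using not_prime_unit \<open>prime (int p)\<close> by blast
  qed
  moreover have "int p \<noteq> 0" using pprime by (simp add: prime_gt_0_nat)
  ultimately have "v (of_int (int p)) = 1" using v_int[of "int p"] by simp
  then show ?thesis by simp
qed
lemma p0: "(of_nat p :: 'k) \<noteq> 0" using pprime by (simp add: prime_gt_0_nat)

lemma vge_int: "vge v (of_int k) 0"
  using v_int_ge[of k] unfolding vge_def by (cases "k = 0") simp_all
lemma vge_pdvd: "int p dvd k \<Longrightarrow> vge v (of_int k) 1"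
proof -
  assume "int p dvd k"
  then obtain m where m: "k = int p * m" by auto
  have vp: "vge v (of_nat p) 1" using v_p unfolding vge_def by simp
  have "vge v (of_nat p * of_int m) (1 + 0)"
    by (rule vge_mult[OF vp vge_int])
  then show ?thesis using m by simp
qed

lemma v_pow: "x \<noteq> 0 \<Longrightarrow> v (x ^ m) = int m * v x"
  by (induction m) (auto simp: v1 vmult algebra_simps)
lemma v_powi: "x \<noteq> 0 \<Longrightarrow> v (x powi n) = n * v x"
proof (cases "n \<ge> 0")
  case True
  assume "x \<noteq> 0" then show ?thesis using True by (simp add: power_int_nonneg_exp v_pow)
next
  case False
  assume x: "x \<noteq> 0"
  have "x powi n = inverse (x powi (-n))" using power_int_minus[of x "-n"] by simp
  also have "x powi (-n) = x ^ nat (-n)" using False by (simp add: power_int_nonneg_exp)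
  finally have "x powi n = inverse (x ^ nat (-n))" .
  then show ?thesis using False x by (simp add: vinv v_pow)
qed
lemma v_ppow: "v (of_nat p powi n) = n" using v_powi[OF p0] v_p by simp
lemma ppow0: "(of_nat p :: 'k) powi n \<noteq> 0" using p0 by (simp add: power_int_not_zero)


lemma p_ge2: "p \<ge> 2" using pprime by (simp add: prime_ge_2_nat)

lemma digit0: "0 \<in> digitset p"
proof -
  define h where "h = (int p - 1) div 2"
  have h: "h \<ge> 0" using p_ge2 unfolding h_def by simp
  show ?thesis unfolding digitset_def h_def[symmetric] using h by simp
qed

lemma digit_diff:
  assumes "a \<in> digitset p" "b \<in> digitset p" "a \<noteq> b"
  shows "\<not> int p dvd (a - b)"
proof
  assume d: "int p dvd (a - b)"
  have lt: "\<bar>a - b\<bar> < int p"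
  proof (cases "p = 2")
    case True
    then have "digitset p = {0, 1}" by (simp add: digitset_def)
    then show ?thesis using assms True by auto
  next
    case False
    define h where "h = (int p - 1) div 2"
    have ds: "digitset p = {-h..h}" using False by (simp add: digitset_def h_def)
    have "2 * h \<le> int p - 1" unfolding h_def by simp
    moreover have "-h \<le> a" "a \<le> h" "-h \<le> b" "b \<le> h" using assms(1,2) ds by auto
    ultimately show ?thesis by linarith
  qed
  have "a - b \<noteq> 0" using assms(3) by simp
  from dvd_imp_le_int[OF this d] have "\<bar>int p\<bar> \<le> \<bar>a - b\<bar>" .
  with lt show False by linarith
qed

lemma exp_unique:
  assumes A: "is_padic_expansion p v x a" and B: "is_padic_expansion p v x b"
  shows "a = b"
proof -
  let ?r = "v x"
  have P: "\<forall>m. ?r \<le> m \<longrightarrow> m < ?r + int k \<longrightarrow> a m = b m" for k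
  proof (induction k)
    case 0 then show ?case by simp
  next
    case (Suc k)
    define n where "n = ?r + int k"
    let ?f = "\<lambda>m. of_int (a m) * of_nat p powi m :: rat"
    let ?g = "\<lambda>m. of_int (b m) * of_nat p powi m :: rat"
    have "(\<Sum>m\<in>{?r..n}. ?f m) - (\<Sum>m\<in>{?r..n}. ?g m) = (\<Sum>m\<in>{?r..n}. ?f m - ?g m)"
      by (simp add: sum_subtractf)
    also have "\<dots> = (\<Sum>m\<in>{?r..n}. if m = n then ?f n - ?g n else 0)"
      by (rule sum.cong) (use Suc n_def in auto)
    also have "\<dots> = ?f n - ?g n" using n_def by simp
    finally have eq: "(\<Sum>m\<in>{?r..n}. ?f m) - (\<Sum>m\<in>{?r..n}. ?g m) = of_int (a n - b n) * of_nat p powi n"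
      by (simp add: algebra_simps)
    have "n \<ge> ?r" using n_def by simp
    then have va: "vge v (x - of_rat (\<Sum>m\<in>{?r..n}. ?f m)) (n + 1)"
      and vb: "vge v (x - of_rat (\<Sum>m\<in>{?r..n}. ?g m)) (n + 1)"
      using A B by (auto simp: is_padic_expansion_def)
    have V0: "vge v ((x - of_rat (\<Sum>m\<in>{?r..n}. ?g m)) - (x - of_rat (\<Sum>m\<in>{?r..n}. ?f m))) (n + 1)"
      by (rule vge_diff[OF vb va])
    have E: "(of_rat (\<Sum>m\<in>{?r..n}. ?f m) - of_rat (\<Sum>m\<in>{?r..n}. ?g m) :: 'k) = of_int (a n - b n) * of_nat p powi n"
      by (simp only: of_rat_diff[symmetric] eq of_rat_mult of_rat_of_int_eq of_rat_powi of_rat_of_nat_eq)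
    have E2: "(x - of_rat (\<Sum>m\<in>{?r..n}. ?g m)) - (x - of_rat (\<Sum>m\<in>{?r..n}. ?f m)) = (of_int (a n - b n) * of_nat p powi n :: 'k)"
      using E by simp
    have V: "vge v (of_int (a n - b n) * of_nat p powi n :: 'k) (n + 1)"
      using V0 by (simp only: E2)
    have "a n = b n"
    proof (rule ccontr)
      assume ne: "a n \<noteq> b n"
      have "\<not> int p dvd (a n - b n)"
        using digit_diff[of "a n" "b n"] A B ne by (auto simp: is_padic_expansion_def)
      then have v0: "v (of_int (a n - b n) :: 'k) = 0" by (rule v_int_0)
      have nz: "(of_int (a n - b n) :: 'k) \<noteq> 0" using ne by simp
      have "v (of_int (a n - b n) * of_nat p powi n :: 'k) = n"
        using vmult[OF nz ppow0] v0 v_ppow by simp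
      with V nz ppow0 show False by (simp add: vge_def)
    qed
    then have an: "a n = b n" .
    show ?case
    proof (intro allI impI)
      fix m assume m: "?r \<le> m" "m < ?r + int (Suc k)"
      then have "m < ?r + int k \<or> m = n" using n_def by auto
      then show "a m = b m" using Suc.IH an m by auto
    qed
  qed
  show ?thesis
  proof
    fix m
    show "a m = b m"
    proof (cases "m < ?r")
      case True then show ?thesis using A B by (simp add: is_padic_expansion_def)
    next
      case False
      then show ?thesis using P[of "nat (m - ?r) + 1"] by simp
    qed
  qed
qed

lemma residue:
  assumes y: "vge v y 0"
  shows "\<exists>d\<in>digitset p. vge v (y - of_int d) 1"
proof -
  obtain q where q: "vge v (y - of_rat q) 1" using dense by blast
  have "\<exists>e::int. vge v (of_rat q - of_int e) 1"
  proof (cases "q = 0")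
    case True then show ?thesis by (intro exI[of _ 0]) simp
  next
    case False
    obtain a b where qa: "quotient_of q = (a, b)" by (cases "quotient_of q")
    have b0: "b > 0" using quotient_of_denom_pos[OF qa] .
    have cop: "coprime a b" using quotient_of_coprime[OF qa] .
    have qd: "q = of_int a / of_int b" using quotient_of_div[OF qa] .
    have a0: "a \<noteq> 0" using False qd by auto
    have qK: "(of_rat q :: 'k) = of_int a / of_int b" using qd by (simp add: of_rat_divide)
    have "vge v (y - (y - of_rat q)) 0"
      by (rule vge_diff[OF y vge_mono[OF q]]) simp
    then have vq: "v (of_rat q :: 'k) \<ge> 0" using False by (simp add: vge_def)
    have nb: "\<not> int p dvd b"
    proof
      assume pb: "int p dvd b"
      have "\<not> int p dvd a"
      proof
        assume "int p dvd a"
        then have "is_unit (int p)" using coprime_common_divisor[OF cop _ pb] by simp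
        then show False using p_ge2 by simp
      qed
      then have va: "v (of_int a :: 'k) = 0" by (rule v_int_0)
      have "vge v (of_int b :: 'k) 1" using vge_pdvd[OF pb] .
      then have vb: "v (of_int b :: 'k) \<ge> 1" using b0 by (simp add: vge_def)
      have "v (of_rat q :: 'k) = v (of_int a :: 'k) - v (of_int b :: 'k)"
        using qK vdiv[of "of_int a" "of_int b"] a0 b0 by simp
      with va vb vq show False by simp
    qed
    have "coprime (int p) b" using prime_imp_coprime[of "int p" b] pprime nb by simp
    then have "gcd b (int p) = 1" by (simp add: coprime_iff_gcd_eq_1 gcd.commute)
    then obtain u w where uw: "u * b + w * int p = 1" using bezout_int[of b "int p"] by auto
    have eq: "(of_rat q :: 'k) - of_int (a * u) = (of_int a * of_int (w * int p)) * inverse (of_int b)"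
    proof -
      have h: "(of_int (w * int p) :: 'k) = 1 - of_int u * of_int b"
        using arg_cong[OF uw, of "of_int :: int \<Rightarrow> 'k"] by (simp add: algebra_simps)
      have bK: "(of_int b :: 'k) \<noteq> 0" using b0 by simp
      show ?thesis by (simp only: h qK, simp only: of_int_mult, rule aux_field[OF bK])
    qed
    have v1': "vge v (of_int a * of_int (w * int p) :: 'k) (0 + 1)"
      by (rule vge_mult[OF vge_int vge_pdvd]) simp
    have v2: "vge v (inverse (of_int b) :: 'k) 0"
      using vinv[of "of_int b"] v_int_0[OF nb] b0 by (simp add: vge_def)
    have "vge v ((of_int a * of_int (w * int p)) * inverse (of_int b) :: 'k) ((0 + 1) + 0)"
      by (rule vge_mult[OF v1' v2])
    then show ?thesis using eq by (intro exI[of _ "a * u"]) simp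
  qed
  then obtain e where e: "vge v (of_rat q - of_int e) 1" by blast
  obtain d where d: "d \<in> digitset p" "int p dvd (e - d)"
  proof (cases "p = 2")
    case True
    have "e - e mod 2 = 2 * (e div 2)" by (rule minus_mod_eq_mult_div)
    then show ?thesis using True by (intro that[of "e mod 2"]) (auto simp: digitset_def)
  next
    case False
    then have "p > 2" using p_ge2 by simp
    then have od: "odd p" using prime_odd_nat pprime by blast
    define h where "h = (int p - 1) div 2"
    obtain j where j: "p = 2 * j + 1" using od by (metis oddE)
    have h2: "2 * h = int p - 1" unfolding h_def j by simp
    have m1: "0 \<le> (e + h) mod int p" "(e + h) mod int p < int p" using p_ge2 by auto
    have "(e + h) - (e + h) mod int p = int p * ((e + h) div int p)" by (rule minus_mod_eq_mult_div)
    then have "int p dvd (e - ((e + h) mod int p - h))" by (simp add: algebra_simps)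
    moreover have "(e + h) mod int p - h \<in> digitset p"
      using False m1 h2 unfolding digitset_def h_def[symmetric] by auto
    ultimately show ?thesis by (intro that) auto
  qed
  have "y - of_int d = (y - of_rat q) + (of_rat q - of_int e) + of_int (e - d)" by simp
  moreover have "vge v ((y - of_rat q) + (of_rat q - of_int e) + of_int (e - d)) 1"
    by (intro vge_add q e vge_pdvd d)
  ultimately show ?thesis using d by auto
qed

lemma pdig_ok: "vge v y 0 \<Longrightarrow> pdig p v y \<in> digitset p \<and> vge v (y - of_int (pdig p v y)) 1"
  unfolding pdig_def using residue[of y] by (metis (mono_tags, lifting) someI_ex)

lemma prem_vge:
  assumes x: "x \<noteq> 0"
  shows "vge v (prem p v x k) (v x + int k)"
proof (induction k)
  case 0 then show ?case by (simp add: vge_def)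
next
  case (Suc k)
  define n where "n = v x + int k"
  define y where "y = prem p v x k / of_nat p powi n"
  have yv: "vge v y 0"
  proof (cases "prem p v x k = 0")
    case True then show ?thesis by (simp add: y_def)
  next
    case False
    then have "v (prem p v x k) \<ge> n" using Suc n_def by (simp add: vge_def)
    then show ?thesis using False vdiv[OF False ppow0] v_ppow y_def by (simp add: vge_def)
  qed
  have "vge v ((y - of_int (pdig p v y)) * of_nat p powi n) (1 + n)"
    by (rule vge_mult[OF conjunct2[OF pdig_ok[OF yv]]]) (simp add: vge_def v_ppow)
  moreover have "prem p v x (Suc k) = (y - of_int (pdig p v y)) * of_nat p powi n"
    using ppow0 by (simp add: y_def n_def algebra_simps)
  ultimately show ?case by (simp add: n_def add_ac)
qed

lemma prem_sum:
  "prem p v x k = x - of_rat (\<Sum>m\<in>{v x..v x + int k - 1}. of_int (pdigits p v x m) * of_nat p powi m)"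
proof (induction k)
  case 0 then show ?case by simp
next
  case (Suc k)
  define n where "n = v x + int k"
  define f where "f = (\<lambda>m. of_int (pdigits p v x m) * of_nat p powi m :: rat)"
  have S: "{v x..n} = insert n {v x..n - 1}" using n_def by auto
  have sumS: "(\<Sum>m\<in>{v x..n}. f m) = f n + (\<Sum>m\<in>{v x..n - 1}. f m)"
    unfolding S by (subst sum.insert) auto
  have D: "pdigits p v x n = pdig p v (prem p v x k / of_nat p powi n)"
    by (simp add: pdigits_def n_def)
  have fn: "(of_rat (f n) :: 'k) = of_int (pdig p v (prem p v x k / of_nat p powi n)) * of_nat p powi n"
    by (simp add: f_def D of_rat_mult of_rat_powi)
  have "prem p v x (Suc k) = prem p v x k - of_rat (f n)" using fn by (simp add: n_def)
  also have "\<dots> = x - of_rat (\<Sum>m\<in>{v x..n}. f m)"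
    using Suc sumS by (simp add: of_rat_add f_def n_def)
  finally have G: "prem p v x (Suc k) = x - of_rat (\<Sum>m\<in>{v x..n}. f m)" .
  have e: "v x + int (Suc k) - 1 = n" by (simp add: n_def)
  show ?case unfolding e using G by (simp add: f_def)
qed

lemma exp_exists:
  assumes x: "x \<noteq> 0"
  shows "is_padic_expansion p v x (pdigits p v x)"
  unfolding is_padic_expansion_def
proof (intro conjI allI impI)
  fix n
  show "pdigits p v x n \<in> digitset p"
  proof (cases "n < v x")
    case True then show ?thesis by (simp add: pdigits_def digit0)
  next
    case False
    define k where "k = nat (n - v x)"
    have nk: "n = v x + int k" using False k_def by simp
    have yv: "vge v (prem p v x k / of_nat p powi n) 0"
    proof (cases "prem p v x k = 0")
      case True then show ?thesis by simp
    next
      case F: False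
      then have "v (prem p v x k) \<ge> n" using prem_vge[OF x, of k] nk by (simp add: vge_def)
      then show ?thesis using F vdiv[OF F ppow0] v_ppow by (simp add: vge_def)
    qed
    show ?thesis using pdig_ok[OF yv] False by (simp add: pdigits_def k_def)
  qed
next
  fix n assume "n < v x" then show "pdigits p v x n = 0" by (simp add: pdigits_def)
next
  define y where "y = x / of_nat p powi v x"
  have yn: "y \<noteq> 0" using x ppow0 by (simp add: y_def)
  have vy: "v y = 0" using vdiv[OF x ppow0] v_ppow y_def by simp
  then have "vge v y 0" by (simp add: vge_def)
  from pdig_ok[OF this] have "vge v (y - of_int (pdig p v y)) 1" by simp
  moreover have "pdigits p v x (v x) = pdig p v y" by (simp add: pdigits_def y_def)
  ultimately show "pdigits p v x (v x) \<noteq> 0" using yn vy by (auto simp: vge_def)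
next
  fix N assume N: "N \<ge> v x"
  define k where "k = nat (N - v x + 1)"
  have e: "v x + int k - 1 = N" using N k_def by simp
  have e2: "v x + int k = N + 1" using N k_def by simp
  have P1: "vge v (prem p v x k) (N + 1)" using prem_vge[OF x, of k] unfolding e2 .
  have P2: "prem p v x k = x - of_rat (\<Sum>n\<in>{v x..N}. of_int (pdigits p v x n) * of_nat p powi n)"
    using prem_sum[of x k] unfolding e .
  show "vge v (x - of_rat (\<Sum>n\<in>{v x..N}. of_int (pdigits p v x n) * of_nat p powi n)) (N + 1)"
    using P1 unfolding P2 .
qed

lemma digits_ok: "x \<noteq> 0 \<Longrightarrow> is_padic_expansion p v x (digits p v x)"
  unfolding digits_def
  by (rule theI[of _ "pdigits p v x"], rule exp_exists, assumption, rule exp_unique, assumption, rule exp_exists, assumption)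

lemma s_good: "vge v (x - of_rat (s_part p v x)) 1"
proof (cases "x = 0")
  case True then show ?thesis by (simp add: s_part_def)
next
  case False
  show ?thesis
  proof (cases "v x \<le> 0")
    case True
    have E: "is_padic_expansion p v x (digits p v x)" by (rule digits_ok[OF False])
    then have H: "\<forall>N \<ge> v x. vge v (x - of_rat (\<Sum>n\<in>{v x..N}. of_int (digits p v x n) * of_nat p powi n)) (N + 1)"
      unfolding is_padic_expansion_def by (elim conjE)
    have "vge v (x - of_rat (\<Sum>n\<in>{v x..0}. of_int (digits p v x n) * of_nat p powi n)) (0 + 1)"
      by (rule H[rule_format, OF True])
    then show ?thesis by (simp add: s_part_def False)
  next
    case F2: False
    then show ?thesis using False by (simp add: s_part_def vge_def)
  qed
qed

lemma t_good: "vge v (x - of_rat (t_part p v x)) 0"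
proof (cases "x = 0")
  case True then show ?thesis by (simp add: t_part_def)
next
  case False
  show ?thesis
  proof (cases "v x \<le> -1")
    case True
    have E: "is_padic_expansion p v x (digits p v x)" by (rule digits_ok[OF False])
    then have H: "\<forall>N \<ge> v x. vge v (x - of_rat (\<Sum>n\<in>{v x..N}. of_int (digits p v x n) * of_nat p powi n)) (N + 1)"
      unfolding is_padic_expansion_def by (elim conjE)
    have "vge v (x - of_rat (\<Sum>n\<in>{v x..-1}. of_int (digits p v x n) * of_nat p powi n)) (-1 + 1)"
      by (rule H[rule_format, OF True])
    then show ?thesis by (simp add: t_part_def False)
  next
    case F2: False
    then show ?thesis using False by (simp add: t_part_def vge_def)
  qed
qed

lemma b_good: "vge v (x - of_rat (algC_b p v j x)) (if j mod 3 = 0 then 1 else 0)"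
proof (cases "j mod 3 = 0")
  case True
  define k where "k = round ((trace_rat x / of_nat (degree (min_poly x)) - s_part p v x) / of_nat p)"
  have "x - of_rat (algC_b p v j x) = (x - of_rat (s_part p v x)) - of_int (k * int p)"
    using True by (simp add: algC_b_def sbar_def k_def of_rat_add of_rat_mult)
  moreover have V: "vge v ((x - of_rat (s_part p v x)) - of_int (k * int p)) 1"
    by (intro vge_diff s_good vge_pdvd) simp
  ultimately have "vge v (x - of_rat (algC_b p v j x)) 1" by (simp only:)
  then show ?thesis using True by simp
next
  case False
  define k where "k = round (trace_rat x / of_nat (degree (min_poly x)) - t_part p v x)"
  have "x - of_rat (algC_b p v j x) = (x - of_rat (t_part p v x)) - of_int k"
    using False by (simp add: algC_b_def tbar_def k_def of_rat_add)
  moreover have "vge v ((x - of_rat (t_part p v x)) - of_int k) 0"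
    by (intro vge_diff t_good vge_int)
  ultimately have "vge v (x - of_rat (algC_b p v j x)) 0" by (simp only:)
  then show ?thesis using False by simp
qed


lemma alpha_suc:
  "algC_alpha p v \<alpha> (Suc j) = Some y \<Longrightarrow> \<exists>x. algC_alpha p v \<alpha> j = Some x \<and>
     x \<noteq> of_rat (algC_b p v j x) \<and> y = inverse (x - of_rat (algC_b p v j x))"
  by (auto split: option.splits if_splits)

lemma alpha_val:
  assumes "algC_alpha p v \<alpha> (Suc j) = Some y"
  shows "y \<noteq> 0 \<and> v y \<le> (if j mod 3 = 0 then -1 else 0)"
proof -
  obtain x where x: "algC_alpha p v \<alpha> j = Some x" "x \<noteq> of_rat (algC_b p v j x)"
    "y = inverse (x - of_rat (algC_b p v j x))" using alpha_suc[OF assms] by blast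
  define d where "d = x - of_rat (algC_b p v j x)"
  have d0: "d \<noteq> 0" using x(2) d_def by simp
  have "vge v d (if j mod 3 = 0 then 1 else 0)" using b_good[of x j] d_def by simp
  then have vd: "v d \<ge> (if j mod 3 = 0 then 1 else 0)" using d0 by (simp add: vge_def)
  have "y = inverse d" using x(3) d_def by simp
  then show ?thesis using d0 vd vinv[OF d0] by auto
qed

lemma F1:
  assumes "algC_alpha p v \<alpha> j = Some x" "j mod 3 = 1"
  shows "algC_b p v j x \<noteq> 0 \<and> v (of_rat (algC_b p v j x)) < 0"
proof -
  obtain i where j: "j = Suc i" using assms(2) by (cases j) auto
  have im: "i mod 3 = 0" using assms(2) j by presburger
  have xv: "x \<noteq> 0" "v x \<le> -1" using alpha_val[where j=i and y=x] assms(1) j im by auto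
  have "vge v (x - of_rat (algC_b p v j x)) 0" using b_good[of x j] assms(2) by simp
  from v_eq[OF this xv(1)] xv(2) show ?thesis by simp
qed

lemma F2:
  assumes "algC_alpha p v \<alpha> j = Some x" "j \<ge> 1" "algC_b p v j x = 0"
  shows "j mod 3 = 2"
proof (rule ccontr)
  assume ne: "j mod 3 \<noteq> 2"
  show False
  proof (cases "j mod 3 = 1")
    case True then show False using F1[OF assms(1)] assms(3) by simp
  next
    case False
    then have j0: "j mod 3 = 0" using ne by presburger
    obtain i where j: "j = Suc i" using assms(2) by (cases j) auto
    have im: "i mod 3 \<noteq> 0" using j0 j by presburger
    have xv: "x \<noteq> 0" "v x \<le> 0" using alpha_val[where j=i and y=x] assms(1) j im by auto
    have "vge v (x - of_rat (algC_b p v j x)) 1" using b_good[of x j] j0 by simp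
    from v_eq[OF this xv(1)] xv(2) assms(3) show False by simp
  qed
qed

lemma F3:
  assumes y: "algC_alpha p v \<alpha> (Suc j) = Some y" and jm: "j mod 3 = 2"
    and x: "algC_alpha p v \<alpha> j = Some x" and b0: "algC_b p v j x = 0"
  shows "algC_b p v (Suc j) y \<noteq> 0 \<and> v (of_rat (algC_b p v (Suc j) y)) = 0"
proof -
  have yx: "y = inverse x" using alpha_suc[OF y] x b0 by auto
  obtain i where j: "j = Suc i" using jm by (cases j) auto
  have im: "i mod 3 \<noteq> 0" using jm j by presburger
  have xv: "x \<noteq> 0" "v x \<le> 0" using alpha_val[where j=i and y=x] x j im by auto
  have vx: "v x = 0"
  proof (rule ccontr)
    assume "v x \<noteq> 0"
    then have "v x < 0" using xv by simp
    moreover have "vge v (x - of_rat (algC_b p v j x)) 0" using b_good[of x j] jm by simp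
    ultimately show False using v_eq[of x "of_rat (algC_b p v j x)" 0] xv b0 by simp
  qed
  have yv: "y \<noteq> 0" "v y = 0" using yx xv vx vinv[of x] by auto
  have "vge v (y - of_rat (algC_b p v (Suc j) y)) 1" using b_good[of y "Suc j"] jm by presburger
  from v_eq[OF this yv(1)] yv(2) show ?thesis by simp
qed

lemma sum0:
  assumes "X \<noteq> 0" "v X = 0" "vge v Y 1"
  shows "X + Y \<noteq> 0 \<and> v (X + Y) = 0"
proof -
  have "vge v (X - (X + Y)) 1" using vge_neg[OF assms(3)] by simp
  from v_eq[OF this assms(1)] assms(2) show ?thesis by simp
qed

lemma F4:
  assumes y: "algC_alpha p v \<alpha> (Suc j) = Some y" and jm: "j mod 3 = 2"
    and x: "algC_alpha p v \<alpha> j = Some x"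
    and b: "algC_b p v j x \<noteq> 0" "v (of_rat (algC_b p v j x)) = 0"
    and b': "algC_b p v (Suc j) y \<noteq> 0" "v (of_rat (algC_b p v (Suc j) y)) = 0"
  shows "algC_b p v j x * algC_b p v (Suc j) y + 1 \<noteq> 0 \<and>
         v (of_rat (algC_b p v j x * algC_b p v (Suc j) y + 1)) = 0"
proof -
  define B where "B = (of_rat (algC_b p v j x) :: 'k)"
  define B' where "B' = (of_rat (algC_b p v (Suc j) y) :: 'k)"
  have yx: "x \<noteq> B" "y = inverse (x - B)" using alpha_suc[OF y] x B_def by auto
  obtain i where j: "j = Suc i" using jm by (cases j) auto
  have im: "i mod 3 \<noteq> 0" using jm j by presburger
  have xv: "x \<noteq> 0" "v x \<le> 0" using alpha_val[where j=i and y=x] x j im by auto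
  have vx: "v x = 0"
  proof (rule ccontr)
    assume "v x \<noteq> 0"
    then have "v x < 0" using xv by simp
    moreover have "vge v (x - B) 0" using b_good[of x j] jm B_def by simp
    ultimately have "v B = v x" using v_eq[of x B 0] xv by simp
    then show False using b(2) B_def \<open>v x < 0\<close> by simp
  qed
  have "vge v (y - B') 1" using b_good[of y "Suc j"] jm B'_def by presburger
  then have "vge v (B' - y) 1" by (rule vge_sym)
  from v_eq[OF this] b' B'_def have yv: "y \<noteq> 0" "v y = 0" by auto
  have yd: "y * (x - B) = 1" using yx by simp
  have id: "B * B' + 1 = x * y + B * (B' - y)"
  proof -
    have "B * B' + 1 = B * B' + y * (x - B)" using yd by simp
    also have "\<dots> = x * y + B * (B' - y)" by (simp add: algebra_simps)
    finally show ?thesis .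
  qed
  have X: "x * y \<noteq> 0" "v (x * y) = 0" using xv yv vx vmult[of x y] by auto
  have vB: "vge v B 0" using b(2) by (simp add: vge_def B_def)
  have Y: "vge v (B * (B' - y)) (0 + 1)" by (rule vge_mult[OF vB \<open>vge v (B' - y) 1\<close>])
  have S: "x * y + B * (B' - y) \<noteq> 0 \<and> v (x * y + B * (B' - y)) = 0" using sum0[OF X] Y by simp
  have "of_rat (algC_b p v j x * algC_b p v (Suc j) y + 1) = B * B' + 1"
    by (simp add: B_def B'_def of_rat_add of_rat_mult)
  then show ?thesis using S id by (metis of_rat_eq_0_iff)
qed

lemma Hm_lemma:
  assumes "(x::rat) \<noteq> 0" "qval p x < 0" "y \<noteq> 0" "qval p y = 0"
  shows "x + y \<noteq> 0 \<and> qval p (x + y) < 0"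
proof -
  have vx: "v (of_rat x) < 0" "(of_rat x :: 'k) \<noteq> 0" using assms vrat[of x] by auto
  have vy: "v (of_rat y :: 'k) = 0" "(of_rat y :: 'k) \<noteq> 0" using assms vrat[of y] by auto
  have "vge v ((of_rat x :: 'k) - (of_rat x + of_rat y)) 0" using vy by (simp add: vge_def vneg)
  from v_eq[OF this vx(2) vx(1)] have "(of_rat x + of_rat y :: 'k) \<noteq> 0 \<and> v (of_rat x + of_rat y :: 'k) = v (of_rat x)" .
  then have "of_rat (x + y) \<noteq> (0::'k) \<and> v (of_rat (x + y) :: 'k) < 0" using vx by (simp add: of_rat_add)
  then show ?thesis using vrat[of "x + y"] by auto
qed

lemma prefix_prop:
  assumes "i < length (algC_raw_prefix p v \<alpha> N)"
  shows "algC_alpha p v \<alpha> i \<noteq> None \<and> algC_raw_prefix p v \<alpha> N ! i = algC_b p v i (the (algC_alpha p v \<alpha> i))"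
proof -
  define xs where "xs = map (algC_raw p v \<alpha>) [0..<N]"
  define T where "T = takeWhile (\<lambda>x. x \<noteq> None) xs"
  have iT: "i < length T" using assms by (simp add: algC_raw_prefix_def T_def xs_def)
  have Ti: "T ! i = xs ! i" using iT by (simp add: T_def takeWhile_nth)
  have "length T \<le> length xs" unfolding T_def by (rule length_takeWhile_le)
  then have iN: "i < N" using iT by (simp add: xs_def)
  have xi: "xs ! i = algC_raw p v \<alpha> i" using iN by (simp add: xs_def)
  have "T ! i \<in> set T" using iT by simp
  then have "T ! i \<noteq> None" unfolding T_def using set_takeWhileD by metis
  then have nn: "algC_alpha p v \<alpha> i \<noteq> None" using Ti xi by (simp add: algC_raw_def)
  have "algC_raw_prefix p v \<alpha> N ! i = the (T ! i)"
    using iT by (simp add: algC_raw_prefix_def T_def xs_def)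
  also have "\<dots> = algC_b p v i (the (algC_alpha p v \<alpha> i))"
    using Ti xi nn by (auto simp: algC_raw_def)
  finally show ?thesis using nn by simp
qed

end

definition einv :: "(nat \<Rightarrow> rat) \<Rightarrow> (nat \<Rightarrow> bool) \<Rightarrow> (rat \<Rightarrow> int) \<Rightarrow> nat \<Rightarrow> rat list \<Rightarrow> bool" where
  "einv R D w q L \<longleftrightarrow> (\<forall>i. 1 \<le> i \<longrightarrow> i < length L \<longrightarrow> L ! i = R (q + i)) \<and>
     (L \<noteq> [] \<longrightarrow> (hd L = R q \<or> (q mod 3 = 0 \<and> hd L \<noteq> 0 \<and> w (hd L) < 0))) \<and>
     (\<forall>j < q + length L. D j)"

context
  fixes R :: "nat \<Rightarrow> rat" and D :: "nat \<Rightarrow> bool" and w :: "rat \<Rightarrow> int"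
  assumes H1: "\<And>j. D j \<Longrightarrow> j mod 3 = 1 \<Longrightarrow> R j \<noteq> 0 \<and> w (R j) < 0"
    and H2: "\<And>j. D j \<Longrightarrow> j \<ge> 1 \<Longrightarrow> R j = 0 \<Longrightarrow> j mod 3 = 2"
    and H3: "\<And>j. D (Suc j) \<Longrightarrow> j mod 3 = 2 \<Longrightarrow> R j = 0 \<Longrightarrow> R (Suc j) \<noteq> 0 \<and> w (R (Suc j)) = 0"
    and Hm: "\<And>x y. x \<noteq> 0 \<Longrightarrow> w x < 0 \<Longrightarrow> y \<noteq> 0 \<Longrightarrow> w y = 0 \<Longrightarrow> x + y \<noteq> 0 \<and> w (x + y) < 0"
begin

lemma inv_tail:
  assumes "einv R D w q (x # z # rest)"
  shows "einv R D w (Suc q) (z # rest)"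
proof -
  have a: "\<forall>i. 1 \<le> i \<longrightarrow> i < length (x # z # rest) \<longrightarrow> (x # z # rest) ! i = R (q + i)"
    "\<forall>j < q + length (x # z # rest). D j" using assms unfolding einv_def by blast+
  have "z = R (Suc q)" using a(1)[rule_format, of 1] by simp
  moreover have "\<forall>i. 1 \<le> i \<longrightarrow> i < length (z # rest) \<longrightarrow> (z # rest) ! i = R (Suc q + i)"
  proof (intro allI impI)
    fix i assume "1 \<le> i" "i < length (z # rest)"
    then show "(z # rest) ! i = R (Suc q + i)" using a(1)[rule_format, of "Suc i"] by simp
  qed
  moreover have "\<forall>j < Suc q + length (z # rest). D j" using a(2) by simp
  ultimately show ?thesis unfolding einv_def by simp
qed

lemma inv_merge:
  assumes "einv R D w q (x # 0 # y # rest)"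
  shows "einv R D w (Suc (Suc q)) ((x + y) # rest) \<and> q mod 3 = 1 \<and> x + y \<noteq> 0 \<and> w (x + y) < 0"
proof -
  have a: "\<forall>i. 1 \<le> i \<longrightarrow> i < length (x # 0 # y # rest) \<longrightarrow> (x # 0 # y # rest) ! i = R (q + i)"
    "hd (x # 0 # y # rest) = R q \<or> (q mod 3 = 0 \<and> x \<noteq> 0 \<and> w x < 0)"
    "\<forall>j < q + length (x # 0 # y # rest). D j" using assms unfolding einv_def by auto
  have r1: "R (Suc q) = 0" using a(1)[rule_format, of 1] by simp
  have d1: "D (Suc q)" "D q" "D (Suc (Suc q))" using a(3) by auto
  have m: "Suc q mod 3 = 2" using H2[OF d1(1) _ r1] by simp
  then have om: "q mod 3 = 1" by presburger
  then have x: "x = R q" using a(2) by auto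
  have xw: "x \<noteq> 0" "w x < 0" using H1[OF d1(2) om] x by auto
  have y: "y = R (Suc (Suc q))" using a(1)[rule_format, of 2] by (simp add: numeral_2_eq_2)
  have yw: "y \<noteq> 0" "w y = 0" using H3[OF d1(3) m r1] y by auto
  have s: "x + y \<noteq> 0" "w (x + y) < 0" using Hm[OF xw yw] by auto
  have "Suc (Suc q) mod 3 = 0" using om by presburger
  moreover have "\<forall>i. 1 \<le> i \<longrightarrow> i < length ((x + y) # rest) \<longrightarrow> ((x + y) # rest) ! i = R (Suc (Suc q) + i)"
  proof (intro allI impI)
    fix i assume "1 \<le> i" "i < length ((x + y) # rest)"
    then show "((x + y) # rest) ! i = R (Suc (Suc q) + i)"
      using a(1)[rule_format, of "Suc (Suc i)"] by (cases i) auto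
  qed
  moreover have "\<forall>j < Suc (Suc q) + length ((x + y) # rest). D j" using a(3) by simp
  ultimately show ?thesis unfolding einv_def using s om by simp
qed

lemma elim_head:
  "einv R D w q L \<Longrightarrow> L \<noteq> [] \<Longrightarrow>
     elim_zeros L \<noteq> [] \<and> (hd (elim_zeros L) = hd L \<or> (hd (elim_zeros L) \<noteq> 0 \<and> w (hd (elim_zeros L)) < 0))"
proof (induction L arbitrary: q rule: elim_zeros.induct)
  case (1 x z y rest)
  show ?case
  proof (cases "z = 0")
    case True
    have M: "einv R D w (Suc (Suc q)) ((x + y) # rest)" "x + y \<noteq> 0 \<and> w (x + y) < 0"
      using inv_merge[of q x y rest] "1.prems"(1) True by auto
    from "1.IH"(1)[OF True M(1)] have I: "elim_zeros ((x + y) # rest) \<noteq> [] \<and>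
      (hd (elim_zeros ((x + y) # rest)) = x + y \<or> (hd (elim_zeros ((x + y) # rest)) \<noteq> 0 \<and> w (hd (elim_zeros ((x + y) # rest))) < 0))"
      by simp
    then show ?thesis using I True M(2) by auto
  next
    case False then show ?thesis by simp
  qed
qed auto

lemma elim_main:
  "einv R D w q L \<Longrightarrow> Suc k < length (elim_zeros L) \<Longrightarrow> elim_zeros L ! k = c1 \<Longrightarrow>
   elim_zeros L ! Suc k = c2 \<Longrightarrow> c1 \<noteq> 0 \<Longrightarrow> w c1 = 0 \<Longrightarrow> c2 \<noteq> 0 \<Longrightarrow> w c2 = 0 \<Longrightarrow>
   \<exists>i. i mod 3 = 2 \<and> D (Suc i) \<and> R i = c1 \<and> R (Suc i) = c2"
proof (induction L arbitrary: q k rule: elim_zeros.induct)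
  case (1 x z y rest)
  show ?case
  proof (cases "z = 0")
    case True
    have M: "einv R D w (Suc (Suc q)) ((x + y) # rest)"
      using inv_merge[of q x y rest] "1.prems"(1) True by auto
    show ?thesis using "1.IH"(1)[OF True M] "1.prems" True by simp
  next
    case False
    have T: "einv R D w (Suc q) (z # y # rest)" using inv_tail "1.prems"(1) by blast
    have el: "elim_zeros (x # z # y # rest) = x # elim_zeros (z # y # rest)" using False by simp
    show ?thesis
    proof (cases k)
      case (Suc k')
      show ?thesis using "1.IH"(2)[OF False T, of k'] "1.prems" el Suc by simp
    next
      case 0
      have c1: "c1 = x" using "1.prems"(3) el 0 by simp
      have c2: "c2 = hd (elim_zeros (z # y # rest))"
        using "1.prems"(4) el 0 elim_head[OF T] by (simp add: hd_conv_nth)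
      have "c2 = z" using elim_head[OF T] c2 "1.prems"(7,8) by auto
      have a: "\<forall>i. 1 \<le> i \<longrightarrow> i < length (x # z # y # rest) \<longrightarrow> (x # z # y # rest) ! i = R (q + i)"
        "x = R q \<or> (q mod 3 = 0 \<and> x \<noteq> 0 \<and> w x < 0)"
        "\<forall>j < q + length (x # z # y # rest). D j" using "1.prems"(1) unfolding einv_def by auto
      have xo: "x = R q" using a(2) c1 "1.prems"(6) by auto
      have zo: "z = R (Suc q)" using a(1)[rule_format, of 1] by simp
      have d: "D q" "D (Suc q)" using a(3) by auto
      have "q mod 3 = 2"
      proof -
        have "q mod 3 \<noteq> 1" using H1[OF d(1)] xo c1 "1.prems"(6) by auto
        moreover have "Suc q mod 3 \<noteq> 1" using H1[OF d(2)] zo \<open>c2 = z\<close> "1.prems"(8) by auto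
        ultimately show ?thesis by presburger
      qed
      then show ?thesis using d xo zo c1 \<open>c2 = z\<close> by blast
    qed
  qed
next
  case ("2_3" x z)
  then have k: "k = 0" by simp
  have a: "\<forall>i. 1 \<le> i \<longrightarrow> i < length [x, z] \<longrightarrow> [x, z] ! i = R (q + i)"
    "x = R q \<or> (q mod 3 = 0 \<and> x \<noteq> 0 \<and> w x < 0)"
    "\<forall>j < q + length [x, z]. D j" using "2_3.prems"(1) unfolding einv_def by auto
  have c: "c1 = x" "c2 = z" using "2_3.prems" k by auto
  have xo: "x = R q" using a(2) c "2_3.prems"(6) by auto
  have zo: "z = R (Suc q)" using a(1)[rule_format, of 1] by simp
  have d: "D q" "D (Suc q)" using a(3) by auto
  have "q mod 3 = 2"
  proof -
    have "q mod 3 \<noteq> 1" using H1[OF d(1)] xo c "2_3.prems"(6) by auto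
    moreover have "Suc q mod 3 \<noteq> 1" using H1[OF d(2)] zo c "2_3.prems"(8) by auto
    ultimately show ?thesis by presburger
  qed
  then show ?case using d xo zo c by blast
qed auto

end

theorem proposition4:
  fixes p :: nat and v :: "'k::field_char_0 \<Rightarrow> int" and \<alpha> :: 'k
    and n :: nat and b0 b1 b2 :: rat
  assumes "padic_field p v"
    and "\<exists>f::rat poly. f \<noteq> 0 \<and> poly (map_poly of_rat f) \<alpha> = 0"
    and "algC_term p v \<alpha> n b0"
    and "algC_term p v \<alpha> (n + 1) b1"
    and "algC_term p v \<alpha> (n + 2) b2"
    and "b0 \<noteq> 0" and "qval p b0 < 0"
    and "b1 \<noteq> 0" and "qval p b1 = 0"
    and "b2 \<noteq> 0" and "qval p b2 = 0"
  shows "b1 * b2 + 1 \<noteq> 0 \<and> qval p (b1 * b2 + 1) = 0"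
proof -
  note pf = assms(1)
  define R where "R = (\<lambda>j. algC_b p v j (the (algC_alpha p v \<alpha> j)))"
  define D where "D = (\<lambda>j. algC_alpha p v \<alpha> j \<noteq> None)"
  have h1: "\<And>j. D j \<Longrightarrow> j mod 3 = 1 \<Longrightarrow> R j \<noteq> 0 \<and> qval p (R j) < 0"
  proof -
    fix j assume a: "D j" "j mod 3 = 1"
    then obtain x where x: "algC_alpha p v \<alpha> j = Some x" unfolding D_def by auto
    have "algC_b p v j x \<noteq> 0 \<and> v (of_rat (algC_b p v j x)) < 0" by (rule F1[OF pf x a(2)])
    then show "R j \<noteq> 0 \<and> qval p (R j) < 0" using vrat[OF pf, of "algC_b p v j x"] x unfolding R_def by auto
  qed
  have h2: "\<And>j. D j \<Longrightarrow> j \<ge> 1 \<Longrightarrow> R j = 0 \<Longrightarrow> j mod 3 = 2"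
  proof -
    fix j assume a: "D j" "j \<ge> 1" "R j = 0"
    then obtain x where x: "algC_alpha p v \<alpha> j = Some x" unfolding D_def by auto
    show "j mod 3 = 2" by (rule F2[OF pf x a(2)]) (use a(3) x in \<open>simp add: R_def\<close>)
  qed
  have h3: "\<And>j. D (Suc j) \<Longrightarrow> j mod 3 = 2 \<Longrightarrow> R j = 0 \<Longrightarrow> R (Suc j) \<noteq> 0 \<and> qval p (R (Suc j)) = 0"
  proof -
    fix j assume a: "D (Suc j)" "j mod 3 = 2" "R j = 0"
    then obtain y where y: "algC_alpha p v \<alpha> (Suc j) = Some y" unfolding D_def by auto
    obtain x where x: "algC_alpha p v \<alpha> j = Some x" using alpha_suc[OF pf y] by blast
    have "algC_b p v j x = 0" using a(3) x by (simp add: R_def)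
    from F3[OF pf y a(2) x this]
    show "R (Suc j) \<noteq> 0 \<and> qval p (R (Suc j)) = 0"
      using vrat[OF pf, of "algC_b p v (Suc j) y"] y unfolding R_def by auto
  qed
  have hm: "\<And>x y. x \<noteq> 0 \<Longrightarrow> qval p x < 0 \<Longrightarrow> y \<noteq> 0 \<Longrightarrow> qval p y = 0 \<Longrightarrow> x + y \<noteq> 0 \<and> qval p (x + y) < 0"
    by (rule Hm_lemma[OF pf])
  have "\<forall>\<^sub>F N in sequentially.
          (n + 1 < length (elim_zeros (algC_raw_prefix p v \<alpha> N)) \<and> elim_zeros (algC_raw_prefix p v \<alpha> N) ! (n + 1) = b1) \<and>
          (n + 2 < length (elim_zeros (algC_raw_prefix p v \<alpha> N)) \<and> elim_zeros (algC_raw_prefix p v \<alpha> N) ! (n + 2) = b2)"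
    using assms(4,5) unfolding algC_term_def by (rule eventually_conj)
  then obtain N0 where "\<forall>N\<ge>N0.
          (n + 1 < length (elim_zeros (algC_raw_prefix p v \<alpha> N)) \<and> elim_zeros (algC_raw_prefix p v \<alpha> N) ! (n + 1) = b1) \<and>
          (n + 2 < length (elim_zeros (algC_raw_prefix p v \<alpha> N)) \<and> elim_zeros (algC_raw_prefix p v \<alpha> N) ! (n + 2) = b2)"
    unfolding eventually_sequentially by blast
  then have N0: "n + 2 < length (elim_zeros (algC_raw_prefix p v \<alpha> N0))"
    "elim_zeros (algC_raw_prefix p v \<alpha> N0) ! (n + 1) = b1"
    "elim_zeros (algC_raw_prefix p v \<alpha> N0) ! Suc (n + 1) = b2" by auto
  define L where "L = algC_raw_prefix p v \<alpha> N0"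
  have inv: "einv R D (qval p) 0 L"
    unfolding einv_def
  proof (intro conjI allI impI)
    fix i assume "1 \<le> i" "i < length L"
    then show "L ! i = R (0 + i)" using prefix_prop[OF pf, where i=i and N=N0 and \<alpha>=\<alpha>] by (simp add: L_def R_def)
  next
    assume "L \<noteq> []"
    then have "hd L = L ! 0" by (simp add: hd_conv_nth)
    moreover have "L ! 0 = R 0" using prefix_prop[OF pf, where i=0 and N=N0 and \<alpha>=\<alpha>] \<open>L \<noteq> []\<close> by (simp add: L_def R_def)
    ultimately show "hd L = R 0 \<or> 0 mod 3 = 0 \<and> hd L \<noteq> 0 \<and> qval p (hd L) < 0" by simp
  next
    fix j assume "j < 0 + length L"
    then show "D j" using prefix_prop[OF pf, where i=j and N=N0 and \<alpha>=\<alpha>] by (simp add: L_def D_def)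
  qed
  have "\<exists>i. i mod 3 = 2 \<and> D (Suc i) \<and> R i = b1 \<and> R (Suc i) = b2"
    by (rule elim_main[OF h1 h2 h3 hm inv, of "n + 1" b1 b2]) (use N0 assms(8-11) L_def in auto)
  then obtain i where i: "i mod 3 = 2" "D (Suc i)" "R i = b1" "R (Suc i) = b2" by blast
  obtain y where y: "algC_alpha p v \<alpha> (Suc i) = Some y" using i(2) unfolding D_def by auto
  obtain x where x: "algC_alpha p v \<alpha> i = Some x" using alpha_suc[OF pf y] by blast
  have bx: "algC_b p v i x = b1" "algC_b p v (Suc i) y = b2" using i(3,4) x y by (auto simp: R_def)
  have vb: "v (of_rat b1) = 0" "v (of_rat b2) = 0" using vrat[OF pf] assms(8-11) by auto
  have "b1 * b2 + 1 \<noteq> 0 \<and> v (of_rat (b1 * b2 + 1)) = 0"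
    using F4[OF pf y i(1) x] bx vb assms(8,10) by simp
  then show ?thesis using vrat[OF pf, of "b1 * b2 + 1"] by simp
qed

end
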